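(* Let $D$ be an $n\times n$ spherical Euclidean distance matrix (EDM), generated by points $p^1,\dots,p^n\in\mathbb{R}^r$ whose affine span is $\mathbb{R}^r$ (so $r$ is the embedding dimension of $D$) and which lie on a hypersphere in $\mathbb{R}^r$ of radius $\rho$. Then \[ \rho^2 = \frac{e^T D e}{2n^2} + \frac{e^T D\, (\mathcal{T}(D))^{\dagger} D e}{4n^2}, \] where $e\in\mathbb{R}^n$ is the all-ones vector, $\mathcal{T}(D) = -\tfrac12 JDJ$ with $J = I_n - \tfrac1n ee^T$, and $A^\dagger$ denotes the Moore–Penrose inverse of $A$.
   Context: An $n\times n$ matrix $D=(d_{ij})$ is a Euclidean distance matrix (EDM) if there exist points $p^1,\dots,p^n$ in some Euclidean space with $d_{ij}=\|p^i-p^j\|^2$ for all $i,j$; the dimension of the affine span of these points is the embedding dimension of $D$. An EDM is spherical if the points generating it lie on a hypersphere. *)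

theory Defs
  imports "HOL-Analysis.Analysis"
begin

definition moore_penrose :: "real^'m^'n \<Rightarrow> real^'n^'m" where
  "moore_penrose A = (THE X. A ** X ** A = A \<and> X ** A ** X = X \<and>
      transpose (A ** X) = A ** X \<and> transpose (X ** A) = X ** A)"

definition edm_of :: "('n::finite \<Rightarrow> real^'r) \<Rightarrow> real^'n^'n" where
  "edm_of p = (\<chi> i j. (norm (p i - p j))^2)"

definition centering :: "real^'n::finite^'n" where
  "centering = mat 1 - (\<chi> i j. 1 / real CARD('n))"

definition gram_T :: "real^'n::finite^'n \<Rightarrow> real^'n^'n" where
  "gram_T D = (- 1/2) *\<^sub>R (centering ** D ** centering)"

end

theory Submission imports Defs begin
lemma mp_unique:
  fixes A :: "real^'m::finite^'n::finite" and X Y :: "real^'n^'m"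
  assumes x1: "A ** X ** A = A" and x2: "X ** A ** X = X" and x3: "transpose (A ** X) = A ** X"
    and x4: "transpose (X ** A) = X ** A"
    and y1: "A ** Y ** A = A" and y2: "Y ** A ** Y = Y" and y3: "transpose (A ** Y) = A ** Y"
    and y4: "transpose (Y ** A) = Y ** A"
  shows "X = Y"
proof -
  have tA1: "transpose A = transpose A ** (A ** Y)"
    by (metis y1 y3 matrix_transpose_mul)
  have tA2: "transpose A = (X ** A) ** transpose A"
    by (metis x1 x4 matrix_transpose_mul matrix_mul_assoc)
  have "X = X ** (A ** X)" using x2 by (simp add: matrix_mul_assoc)
  also have "\<dots> = X ** (transpose X ** transpose A)" by (metis x3 matrix_transpose_mul)
  also have "\<dots> = X ** (transpose X ** (transpose A ** (A ** Y)))" using tA1 by simp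
  also have "\<dots> = X ** transpose (A ** X) ** A ** Y" by (simp add: matrix_transpose_mul matrix_mul_assoc)
  also have "\<dots> = X ** A ** Y" using x2 x3 by (simp add: matrix_mul_assoc)
  finally have X: "X = X ** A ** Y" .
  have "Y = (Y ** A) ** Y" using y2 by (simp add: matrix_mul_assoc)
  also have "\<dots> = (transpose A ** transpose Y) ** Y" by (metis y4 matrix_transpose_mul)
  also have "\<dots> = (((X ** A) ** transpose A) ** transpose Y) ** Y" using tA2 by simp
  also have "\<dots> = X ** A ** transpose (Y ** A) ** Y" by (simp add: matrix_transpose_mul matrix_mul_assoc)
  also have "\<dots> = X ** A ** (Y ** A ** Y)" using y4 by (simp add: matrix_mul_assoc)
  also have "\<dots> = X ** A ** Y" using y2 by simp
  finally show ?thesis using X by simp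
qed

lemma centering_entry: "(centering :: real^'n::finite^'n) $ i $ k = (if i = k then 1 else 0) - 1 / real CARD('n)"
  by (simp add: centering_def mat_def)

lemma centering_left: "((centering :: real^'n::finite^'n) ** A) $ i $ j = A $ i $ j - (\<Sum>k\<in>UNIV. A $ k $ j) / real CARD('n)"
proof -
  have "((centering :: real^'n::finite^'n) ** A) $ i $ j = (\<Sum>k\<in>UNIV. (if i = k then A $ k $ j else 0) - A $ k $ j / real CARD('n))"
    unfolding matrix_matrix_mult_def centering_entry by (auto intro!: sum.cong simp: algebra_simps)
  also have "\<dots> = A $ i $ j - (\<Sum>k\<in>UNIV. A $ k $ j) / real CARD('n)"
    by (simp add: sum_subtractf sum_divide_distrib)
  finally show ?thesis .
qed

lemma centering_right: "(A ** (centering :: real^'n::finite^'n)) $ i $ j = A $ i $ j - (\<Sum>k\<in>UNIV. A $ i $ k) / real CARD('n)"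
proof -
  have "(A ** (centering :: real^'n::finite^'n)) $ i $ j = (\<Sum>k\<in>UNIV. (if k = j then A $ i $ k else 0) - A $ i $ k / real CARD('n))"
    unfolding matrix_matrix_mult_def centering_entry by (auto intro!: sum.cong simp: algebra_simps)
  also have "\<dots> = A $ i $ j - (\<Sum>k\<in>UNIV. A $ i $ k) / real CARD('n)"
    by (simp add: sum_subtractf sum_divide_distrib)
  finally show ?thesis .
qed


theorem lemma4:
  fixes p :: "'n::finite \<Rightarrow> real^'r::finite" and c :: "real^'r" and \<rho> :: real
  assumes span: "affine hull (range p) = UNIV"
    and sphere: "\<forall>i. dist (p i) c = \<rho>"
  defines "D \<equiv> edm_of p" and "e \<equiv> (1 :: real^'n)" and "n \<equiv> real CARD('n)"
  shows "\<rho>^2 = (e \<bullet> (D *v e)) / (2 * n^2)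
              + ((e v* D) \<bullet> (moore_penrose (gram_T D) *v (D *v e))) / (4 * n^2)"
proof -
  have npos: "n > 0" unfolding n_def by simp
  define m where "m = (1 / n) *\<^sub>R (\<Sum>i\<in>UNIV. p i)"
  define u where "u i = p i - m" for i
  define d where "d = m - c"
  define S where "S = (\<Sum>k\<in>UNIV. u k \<bullet> u k)"
  have usum: "(\<Sum>i\<in>UNIV. u i) = 0"
  proof -
    have "(\<Sum>i\<in>(UNIV::'n set). m) = n *\<^sub>R m" by (simp only: sum_constant_scaleR n_def card_UNIV)
    then show ?thesis using npos by (simp add: u_def sum_subtractf m_def)
  qed
  have usum_inner: "(\<Sum>k\<in>UNIV. u k \<bullet> x) = 0" for x
    by (simp add: inner_sum_left[symmetric] usum)
  have usum_inner2: "(\<Sum>k\<in>UNIV. x \<bullet> u k) = 0" for x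
    by (simp add: inner_sum_right[symmetric] usum)
  have Dent: "D $ k $ l = u k \<bullet> u k + u l \<bullet> u l - 2 * (u k \<bullet> u l)" for k l
  proof -
    have "p k - p l = u k - u l" by (simp add: u_def)
    then have "D $ k $ l = (u k - u l) \<bullet> (u k - u l)"
      unfolding D_def edm_of_def by (simp add: power2_norm_eq_inner)
    then show ?thesis by (simp add: inner_diff_left inner_diff_right inner_commute)
  qed
  have rowsum: "(\<Sum>l\<in>UNIV. D $ k $ l) = n * (u k \<bullet> u k) + S" for k
    by (simp add: Dent sum.distrib sum_subtractf usum_inner2 sum_distrib_left[symmetric] S_def n_def)
  have colsum: "(\<Sum>k\<in>UNIV. D $ k $ l) = S + n * (u l \<bullet> u l)" for l
    by (simp add: Dent sum.distrib sum_subtractf usum_inner sum_distrib_left[symmetric] S_def n_def)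
  define U :: "real^'r^'n" where "U = (\<chi> i. u i)"
  have Uv: "U *v x = (\<chi> i. u i \<bullet> x)" for x
    by (simp add: U_def matrix_vector_mult_def inner_vec_def vec_eq_iff)
  have Ut: "transpose U *v y = (\<Sum>i\<in>UNIV. y $ i *\<^sub>R u i)" for y
    by (simp add: U_def matrix_vector_mult_def transpose_def vec_eq_iff sum_component mult.commute)
  have UtE: "transpose U *v e = 0"
    unfolding Ut by (simp add: e_def usum)
  have eU: "e v* U = 0" using UtE by simp
  have T: "gram_T D = U ** transpose U"
  proof -
    have "(centering ** D ** centering) $ i $ j = - 2 * (u i \<bullet> u j)" for i j
    proof -
      have CD: "(centering ** D) $ i $ l = D $ i $ l - (S + n * (u l \<bullet> u l)) / n" for l
        by (simp only: centering_left colsum n_def)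
      have s2: "(\<Sum>l\<in>UNIV. (S + n * (u l \<bullet> u l)) / n) = 2 * S"
        using npos by (simp add: sum_divide_distrib[symmetric] sum.distrib sum_distrib_left[symmetric] S_def[symmetric]) (simp add: n_def)
      have rs: "(\<Sum>l\<in>UNIV. (centering ** D) $ i $ l) = n * (u i \<bullet> u i) - S"
        by (simp only: CD sum_subtractf rowsum s2)
      have "(centering ** D ** centering) $ i $ j = (centering ** D) $ i $ j - (n * (u i \<bullet> u i) - S) / n"
        by (simp only: centering_right rs n_def)
      also have "\<dots> = - 2 * (u i \<bullet> u j)"
        unfolding CD Dent using npos by (simp add: field_simps)
      finally show ?thesis .
    qed
    then show ?thesis
      by (simp add: gram_T_def vec_eq_iff matrix_matrix_mult_def U_def transpose_def inner_vec_def mult.commute)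
  qed
  define G where "G = transpose U ** U"
  have Gker: "G *v x = 0 \<Longrightarrow> x = 0" for x
  proof -
    assume Gx: "G *v x = 0"
    have "(U *v x) \<bullet> (U *v x) = x \<bullet> (G *v x)"
      using dot_lmul_matrix[of x "transpose U" "U *v x"]
      by (simp add: G_def matrix_vector_mul_assoc)
    then have "U *v x = 0" using Gx by simp
    then have ox: "u i \<bullet> x = 0" for i by (simp add: Uv vec_eq_iff)
    have "m \<in> affine hull (range p)" using span by simp
    from affine_hull_span_gen[OF this] span
    have "m + x \<in> (\<lambda>y. m + y) ` span ((\<lambda>y. - m + y) ` range p)" by simp
    then have xs: "x \<in> span ((\<lambda>y. - m + y) ` range p)" by auto
    have "orthogonal x x"
    proof (rule orthogonal_to_span[OF xs])
      have ox': "x \<bullet> (p i - m) = 0" for i using ox[of i] by (simp add: u_def inner_commute)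
      show "orthogonal x y" if "y \<in> (\<lambda>y. - m + y) ` range p" for y
        using that ox' by (auto simp: orthogonal_def)
    qed
    then show "x = 0" by (simp add: orthogonal_def)
  qed
  obtain B where BG: "B ** G = mat 1"
    using Gker matrix_left_invertible_ker[of G] by blast
  have GB: "G ** B = mat 1" using BG matrix_left_right_inverse by blast
  have Gt: "transpose G = G" by (simp add: G_def matrix_transpose_mul)
  have Bt: "transpose B = B"
  proof -
    have "transpose B ** G = mat 1"
      by (metis GB Gt matrix_transpose_mul transpose_mat)
    then have "transpose B = transpose B ** (G ** B)" using GB by simp
    also have "\<dots> = (transpose B ** G) ** B" by (simp add: matrix_mul_assoc)
    finally show ?thesis using \<open>transpose B ** G = mat 1\<close> by simp
  qed
  define X where "X = U ** B ** B ** transpose U"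
  have TXT: "(U ** transpose U) ** X ** (U ** transpose U) = U ** transpose U"
  proof -
    have "(U ** transpose U) ** X ** (U ** transpose U) = U ** (G ** B) ** (B ** G) ** transpose U"
      by (simp add: X_def G_def matrix_mul_assoc)
    then show ?thesis by (simp add: GB BG)
  qed
  have XTX: "X ** (U ** transpose U) ** X = X"
  proof -
    have "X ** (U ** transpose U) ** X = U ** B ** (B ** G) ** (G ** B) ** B ** transpose U"
      by (simp add: X_def G_def matrix_mul_assoc)
    then show ?thesis by (simp add: GB BG X_def)
  qed
  have TX: "(U ** transpose U) ** X = U ** B ** transpose U"
  proof -
    have "(U ** transpose U) ** X = U ** (G ** B) ** B ** transpose U"
      by (simp add: X_def G_def matrix_mul_assoc)
    then show ?thesis by (simp add: GB)
  qed
  have XT: "X ** (U ** transpose U) = U ** B ** transpose U"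
  proof -
    have "X ** (U ** transpose U) = U ** B ** (B ** G) ** transpose U"
      by (simp add: X_def G_def matrix_mul_assoc)
    then show ?thesis by (simp add: BG)
  qed
  have sym: "transpose (U ** B ** transpose U) = U ** B ** transpose U"
    by (simp add: matrix_transpose_mul Bt matrix_mul_assoc)
  have MP: "moore_penrose (gram_T D) = X"
    unfolding moore_penrose_def T
  proof (rule the_equality)
    show "U ** transpose U ** X ** (U ** transpose U) = U ** transpose U \<and>
      X ** (U ** transpose U) ** X = X \<and>
      transpose (U ** transpose U ** X) = U ** transpose U ** X \<and>
      transpose (X ** (U ** transpose U)) = X ** (U ** transpose U)"
      using TXT XTX TX XT sym by simp
    fix Y assume "U ** transpose U ** Y ** (U ** transpose U) = U ** transpose U \<and>
      Y ** (U ** transpose U) ** Y = Y \<and>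
      transpose (U ** transpose U ** Y) = U ** transpose U ** Y \<and>
      transpose (Y ** (U ** transpose U)) = Y ** (U ** transpose U)"
    then show "Y = X" using mp_unique[of "U ** transpose U" X Y] TXT XTX TX XT sym by auto
  qed
  have sph: "u i \<bullet> u i = \<rho>^2 - 2 * (u i \<bullet> d) - d \<bullet> d" for i
  proof -
    have "p i - c = u i + d" by (simp add: u_def d_def)
    moreover have "norm (p i - c) = \<rho>" using sphere by (simp add: dist_norm)
    ultimately have "(u i + d) \<bullet> (u i + d) = \<rho>^2" by (metis power2_norm_eq_inner)
    then show ?thesis by (simp add: inner_add_left inner_add_right inner_commute algebra_simps)
  qed
  have Sval: "S = n * (\<rho>^2 - d \<bullet> d)"
    by (simp add: S_def sph sum_subtractf sum.distrib sum_distrib_left[symmetric] usum_inner n_def algebra_simps)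
  define \<alpha> where "\<alpha> = 2 * n * (\<rho>^2 - d \<bullet> d)"
  have De: "D *v e = \<alpha> *\<^sub>R e - (2 * n) *\<^sub>R (U *v d)"
  proof -
    have Dev: "(D *v e) $ i = (\<Sum>j\<in>UNIV. D $ i $ j)" for i by (simp add: matrix_vector_mult_def e_def)
    have ei: "e $ i = 1" for i by (simp add: e_def)
    show ?thesis by (simp add: vec_eq_iff Dev rowsum Uv sph Sval \<alpha>_def ei algebra_simps)
  qed
  have ee: "e \<bullet> e = n" by (simp add: e_def inner_vec_def n_def)
  have eUx: "e \<bullet> (U *v x) = 0" for x
    using dot_lmul_matrix[of e U x] eU by simp
  have term1: "e \<bullet> (D *v e) = 2 * n^2 * (\<rho>^2 - d \<bullet> d)"
    by (simp add: De inner_diff_right eUx ee \<alpha>_def power2_eq_square)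
  have Dt: "transpose D = D"
    by (simp add: vec_eq_iff transpose_def D_def edm_of_def norm_minus_commute)
  have eD: "e v* D = D *v e"
    by (metis Dt transpose_matrix_vector)
  have Xe: "X *v e = 0"
    by (simp add: X_def matrix_vector_mul_assoc[symmetric] eU)
  have XU: "X ** U = U ** B"
  proof -
    have "X ** U = U ** B ** (B ** G)" by (simp add: X_def G_def matrix_mul_assoc)
    then show ?thesis by (simp add: BG)
  qed
  define w where "w = U *v (B *v d)"
  have XUd: "X *v (U *v d) = w"
    by (simp add: w_def matrix_vector_mul_assoc XU)
  have Xy: "X *v (D *v e) = - (2 * n) *\<^sub>R w"
    by (simp add: De matrix_vector_mult_diff_distrib matrix_vector_mult_scaleR Xe XUd)
  have Udw: "(U *v d) \<bullet> w = d \<bullet> d"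
  proof -
    have "(U *v d) \<bullet> w = (d v* transpose U) \<bullet> (U *v (B *v d))" by (simp add: w_def)
    also have "\<dots> = d \<bullet> (transpose U *v (U *v (B *v d)))" by (rule dot_lmul_matrix)
    also have "\<dots> = d \<bullet> (G *v (B *v d))"
      by (simp only: G_def matrix_vector_mul_assoc matrix_mul_assoc)
    also have "\<dots> = d \<bullet> d" by (simp add: matrix_vector_mul_assoc GB)
    finally show ?thesis .
  qed
  have term2: "(e v* D) \<bullet> (moore_penrose (gram_T D) *v (D *v e)) = 4 * n^2 * (d \<bullet> d)"
    unfolding eD MP Xy
    by (simp add: De inner_diff_left w_def eUx Udw[unfolded w_def] power2_eq_square)
  show ?thesis unfolding term1 term2 using npos by (simp add: field_simps)
qed
end
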